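(* Let $v:\mathcal Q\to\mathbb R$ be the valuation induced by an assignment message, and let $\mathbf p\in\mathbb R^n$. Consider the linear program (MCF) in variables $y_I$, $I\in\mathcal I$: minimize $\sum_{i=1}^n\sum_{j\in R_i}(p_i-v_j)\,y_{\{j\}}$ subject to $y_I-\sum_{K\in s_0(I)}y_K=0$ for all non-singleton $I\in\mathcal T_0$; $\sum_{K\in s_i(I)}y_K-y_I=0$ for all non-singleton $I\in\mathcal T_i$, $i=1,\dots,n$; $\sum_{i=1}^n y_{R_i}-y_{R_0}=0$; $\ell(I)\le y_I\le u(I)$ for all $I\in\mathcal I$. Then $\mathbf q\in D(\mathbf p)$ if and only if there is an integral optimal solution $\mathbf y$ of (MCF) with $q_i=y_{R_i}$ for all $i=1,\dots,n$.
   Context: There are $n\ge2$ goods; $D(\mathbf p)=\arg\max_{\mathbf q\in\mathcal Q}v(\mathbf q)-\langle\mathbf p,\mathbf q\rangle$. A family $\mathcal T$ of subsets of a finite set $J$ is a tree if it is nonempty and any two members with nonempty intersection are nested. For $K\in\mathcal T$, its predecessor is the inclusion-minimal $L\in\mathcal T$ with $L\supsetneq K$ (if it exists), and $s_{\mathcal T}(L)$ is the set of $K\in\mathcal T$ whose predecessor is $L$. An assignment message consists of variables $J=\{1,\dots,m\}$, each $j$ associated with a good $k_j\in\{1,\dots,n\}$ and value $v_j\in\mathbb R$, with $R_i=\{j:k_j=i\}$ nonempty for all $i\ge1$ and $R_0:=J$; and a family $\mathcal I=\mathcal T_0\cup\dots\cup\mathcal T_n$ of subsets of $J$ with integral bounds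 $\ell(I)\le 0\le u(I)$, where each $\mathcal T_i$ is a tree, for $i\ge1$ $\mathcal T_i\subseteq\mathcal P(R_i)$ contains $R_i$ and all $\{j\}$, $j\in R_i$, and $\mathcal T_0$ contains $J$ and all $\{j\}$, $j\in J$. We write $s_i(L):=s_{\mathcal T_i}(L)$. It is assumed (without loss of generality) that the trees intersect only in terminal nodes: $\mathcal T_0\cap\mathcal T_i=\{\{j\}:j\in R_i\}$ and $\mathcal T_i\cap\mathcal T_k=\emptyset$ for distinct $i,k\ge1$. The induced valuation is $v(\mathbf q)=\max\{\sum_jv_jx_j:\mathbf x\in\mathbb Z^m,\ \ell(I)\le\sum_{j\in I}x_j\le u(I)\ \forall I\in\mathcal I,\ \sum_{j\in R_i}x_j=q_i\ \forall i\}$ on the set $\mathcal Q$ of $\mathbf q\in\mathbb Z^n$ for which this is feasible. *)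

theory Defs
  imports Complex_Main
begin

text \<open>Vectors in R^n / Z^n are functions on nat,
  of which only the coordinates 1..n are ever used.\<close>

definition is_tree :: "'a set set \<Rightarrow> bool" where
  "is_tree T \<longleftrightarrow> T \<noteq> {} \<and> (\<forall>A\<in>T. \<forall>B\<in>T. A \<inter> B \<noteq> {} \<longrightarrow> A \<subseteq> B \<or> B \<subseteq> A)"

definition is_pred :: "'a set set \<Rightarrow> 'a set \<Rightarrow> 'a set \<Rightarrow> bool" where
  "is_pred T K L \<longleftrightarrow> L \<in> T \<and> K \<subset> L \<and> \<not> (\<exists>M\<in>T. K \<subset> M \<and> M \<subset> L)"

definition succs :: "'a set set \<Rightarrow> 'a set \<Rightarrow> 'a set set" where
  "succs T L = {K \<in> T. is_pred T K L}"

definition Jset :: "nat \<Rightarrow> nat set" where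
  "Jset m = {1..m}"

definition Rset :: "nat \<Rightarrow> (nat \<Rightarrow> nat) \<Rightarrow> nat \<Rightarrow> nat set" where
  "Rset m kk i = (if i = 0 then Jset m else {j \<in> Jset m. kk j = i})"

definition Ifam :: "nat \<Rightarrow> (nat \<Rightarrow> nat set set) \<Rightarrow> nat set set" where
  "Ifam n T = (\<Union>i\<in>{0..n}. T i)"

definition assignment_message ::
  "nat \<Rightarrow> nat \<Rightarrow> (nat \<Rightarrow> nat) \<Rightarrow> (nat \<Rightarrow> nat set set) \<Rightarrow> (nat set \<Rightarrow> int) \<Rightarrow> (nat set \<Rightarrow> int) \<Rightarrow> bool"
where
  "assignment_message n m kk T l u \<longleftrightarrow>
     (\<forall>j\<in>Jset m. kk j \<in> {1..n}) \<and>
     (\<forall>i\<in>{1..n}. Rset m kk i \<noteq> {}) \<and>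
     is_tree (T 0) \<and> T 0 \<subseteq> Pow (Jset m) \<and> Jset m \<in> T 0 \<and> (\<forall>j\<in>Jset m. {j} \<in> T 0) \<and>
     (\<forall>i\<in>{1..n}. is_tree (T i) \<and> T i \<subseteq> Pow (Rset m kk i) \<and> Rset m kk i \<in> T i \<and>
        (\<forall>j\<in>Rset m kk i. {j} \<in> T i)) \<and>
     (\<forall>I\<in>Ifam n T. l I \<le> 0 \<and> 0 \<le> u I) \<and>
     (\<forall>i\<in>{1..n}. T 0 \<inter> T i = {{j} | j. j \<in> Rset m kk i}) \<and>
     (\<forall>i\<in>{1..n}. \<forall>k\<in>{1..n}. i \<noteq> k \<longrightarrow> T i \<inter> T k = {})"

definition feasible_x ::
  "nat \<Rightarrow> nat \<Rightarrow> (nat \<Rightarrow> nat) \<Rightarrow> (nat \<Rightarrow> nat set set) \<Rightarrow> (nat set \<Rightarrow> int) \<Rightarrow> (nat set \<Rightarrow> int)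
    \<Rightarrow> (nat \<Rightarrow> int) \<Rightarrow> (nat \<Rightarrow> int) \<Rightarrow> bool"
where
  "feasible_x n m kk T l u q x \<longleftrightarrow>
     (\<forall>I\<in>Ifam n T. l I \<le> (\<Sum>j\<in>I. x j) \<and> (\<Sum>j\<in>I. x j) \<le> u I) \<and>
     (\<forall>i\<in>{1..n}. (\<Sum>j\<in>Rset m kk i. x j) = q i)"

definition Qset ::
  "nat \<Rightarrow> nat \<Rightarrow> (nat \<Rightarrow> nat) \<Rightarrow> (nat \<Rightarrow> nat set set) \<Rightarrow> (nat set \<Rightarrow> int) \<Rightarrow> (nat set \<Rightarrow> int)
    \<Rightarrow> (nat \<Rightarrow> int) set"
where
  "Qset n m kk T l u = {q. \<exists>x. feasible_x n m kk T l u q x}"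

definition induced_val ::
  "nat \<Rightarrow> nat \<Rightarrow> (nat \<Rightarrow> nat) \<Rightarrow> (nat \<Rightarrow> real) \<Rightarrow> (nat \<Rightarrow> nat set set) \<Rightarrow> (nat set \<Rightarrow> int)
    \<Rightarrow> (nat set \<Rightarrow> int) \<Rightarrow> (nat \<Rightarrow> int) \<Rightarrow> real"
where
  "induced_val n m kk vv T l u q =
     Max {(\<Sum>j\<in>Jset m. vv j * real_of_int (x j)) | x. feasible_x n m kk T l u q x}"

definition demand ::
  "nat \<Rightarrow> nat \<Rightarrow> (nat \<Rightarrow> nat) \<Rightarrow> (nat \<Rightarrow> real) \<Rightarrow> (nat \<Rightarrow> nat set set) \<Rightarrow> (nat set \<Rightarrow> int)
    \<Rightarrow> (nat set \<Rightarrow> int) \<Rightarrow> (nat \<Rightarrow> real) \<Rightarrow> (nat \<Rightarrow> int) set"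
where
  "demand n m kk vv T l u p =
     {q \<in> Qset n m kk T l u. \<forall>q'\<in>Qset n m kk T l u.
        induced_val n m kk vv T l u q' - (\<Sum>i\<in>{1..n}. p i * real_of_int (q' i))
        \<le> induced_val n m kk vv T l u q - (\<Sum>i\<in>{1..n}. p i * real_of_int (q i))}"

definition is_singleton_set :: "'a set \<Rightarrow> bool" where
  "is_singleton_set I \<longleftrightarrow> (\<exists>j. I = {j})"

definition mcf_feasible ::
  "nat \<Rightarrow> nat \<Rightarrow> (nat \<Rightarrow> nat) \<Rightarrow> (nat \<Rightarrow> nat set set) \<Rightarrow> (nat set \<Rightarrow> int) \<Rightarrow> (nat set \<Rightarrow> int)
    \<Rightarrow> (nat set \<Rightarrow> real) \<Rightarrow> bool"
where
  "mcf_feasible n m kk T l u y \<longleftrightarrow>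
     (\<forall>I\<in>T 0. \<not> is_singleton_set I \<longrightarrow> y I - (\<Sum>K\<in>succs (T 0) I. y K) = 0) \<and>
     (\<forall>i\<in>{1..n}. \<forall>I\<in>T i. \<not> is_singleton_set I \<longrightarrow> (\<Sum>K\<in>succs (T i) I. y K) - y I = 0) \<and>
     (\<Sum>i\<in>{1..n}. y (Rset m kk i)) - y (Rset m kk 0) = 0 \<and>
     (\<forall>I\<in>Ifam n T. real_of_int (l I) \<le> y I \<and> y I \<le> real_of_int (u I))"

definition mcf_obj ::
  "nat \<Rightarrow> nat \<Rightarrow> (nat \<Rightarrow> nat) \<Rightarrow> (nat \<Rightarrow> real) \<Rightarrow> (nat \<Rightarrow> real) \<Rightarrow> (nat set \<Rightarrow> real) \<Rightarrow> real"
where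
  "mcf_obj n m kk vv p y = (\<Sum>i\<in>{1..n}. \<Sum>j\<in>Rset m kk i. (p i - vv j) * y {j})"

definition mcf_optimal ::
  "nat \<Rightarrow> nat \<Rightarrow> (nat \<Rightarrow> nat) \<Rightarrow> (nat \<Rightarrow> real) \<Rightarrow> (nat \<Rightarrow> nat set set) \<Rightarrow> (nat set \<Rightarrow> int)
    \<Rightarrow> (nat set \<Rightarrow> int) \<Rightarrow> (nat \<Rightarrow> real) \<Rightarrow> (nat set \<Rightarrow> real) \<Rightarrow> bool"
where
  "mcf_optimal n m kk vv T l u p y \<longleftrightarrow>
     mcf_feasible n m kk T l u y \<and>
     (\<forall>y'. mcf_feasible n m kk T l u y' \<longrightarrow> mcf_obj n m kk vv p y \<le> mcf_obj n m kk vv p y')"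

end

theory Submission
  imports Defs "HOL-Library.FuncSet"
begin


definition deg :: "('e \<Rightarrow> 'v) \<Rightarrow> ('e \<Rightarrow> 'v) \<Rightarrow> 'e set \<Rightarrow> 'v \<Rightarrow> nat" where
  "deg src tgt E v = card {e\<in>E. tgt e = v} + card {e\<in>E. src e = v}"

definition bal :: "('e \<Rightarrow> 'v) \<Rightarrow> ('e \<Rightarrow> 'v) \<Rightarrow> 'e set \<Rightarrow> ('e \<Rightarrow> real) \<Rightarrow> 'v \<Rightarrow> real" where
  "bal src tgt E d v = (\<Sum>e\<in>{e\<in>E. tgt e = v}. d e) - (\<Sum>e\<in>{e\<in>E. src e = v}. d e)"

lemma bal_insert:
  assumes "finite F" "e \<notin> F"
  shows "bal src tgt (insert e F) (d(e := t)) v =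
     bal src tgt F d v + (if tgt e = v then t else 0) - (if src e = v then t else 0)"
proof -
  have 1: "(\<Sum>x\<in>{x\<in>insert e F. tgt x = v}. (d(e:=t)) x) = (if tgt e = v then t else 0) + (\<Sum>x\<in>{x\<in>F. tgt x = v}. d x)"
  proof (cases "tgt e = v")
    case True
    then have "{x\<in>insert e F. tgt x = v} = insert e {x\<in>F. tgt x = v}" by auto
    moreover have "(\<Sum>x\<in>{x\<in>F. tgt x = v}. (d(e:=t)) x) = (\<Sum>x\<in>{x\<in>F. tgt x = v}. d x)"
      using assms by (intro sum.cong) auto
    ultimately show ?thesis using assms True by simp
  next
    case False
    then have "{x\<in>insert e F. tgt x = v} = {x\<in>F. tgt x = v}" by auto
    moreover have "(\<Sum>x\<in>{x\<in>F. tgt x = v}. (d(e:=t)) x) = (\<Sum>x\<in>{x\<in>F. tgt x = v}. d x)"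
      using assms by (intro sum.cong) auto
    ultimately show ?thesis using assms False by simp
  qed
  have 2: "(\<Sum>x\<in>{x\<in>insert e F. src x = v}. (d(e:=t)) x) = (if src e = v then t else 0) + (\<Sum>x\<in>{x\<in>F. src x = v}. d x)"
  proof (cases "src e = v")
    case True
    then have "{x\<in>insert e F. src x = v} = insert e {x\<in>F. src x = v}" by auto
    moreover have "(\<Sum>x\<in>{x\<in>F. src x = v}. (d(e:=t)) x) = (\<Sum>x\<in>{x\<in>F. src x = v}. d x)"
      using assms by (intro sum.cong) auto
    ultimately show ?thesis using assms True by simp
  next
    case False
    then have "{x\<in>insert e F. src x = v} = {x\<in>F. src x = v}" by auto
    moreover have "(\<Sum>x\<in>{x\<in>F. src x = v}. (d(e:=t)) x) = (\<Sum>x\<in>{x\<in>F. src x = v}. d x)"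
      using assms by (intro sum.cong) auto
    ultimately show ?thesis using assms False by simp
  qed
  show ?thesis unfolding bal_def 1 2 by simp
qed

lemma cyc:
  assumes "finite E" "E \<noteq> {}" "\<forall>v\<in>C. deg src tgt E v \<noteq> 1"
  shows "\<exists>d. (\<forall>e. e \<notin> E \<longrightarrow> d e = 0) \<and> (\<exists>e\<in>E. d e \<noteq> 0) \<and> (\<forall>v\<in>C. bal src tgt E d v = 0)"
  using assms
proof (induction E arbitrary: src tgt C rule: finite_induct)
  case empty then show ?case by simp
next
  case (insert e F)
  define a where "a = src e"
  define b where "b = tgt e"
  define ind where "ind = (\<lambda>x::'a. 0::real)(e := 1)"
  have bal_ind: "bal src tgt (insert e F) ind v = (if b = v then 1 else 0) - (if a = v then 1 else 0)" for v
  proof -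
    have z: "bal src tgt F (\<lambda>x. 0) v = 0" by (simp add: bal_def)
    show ?thesis unfolding ind_def using bal_insert[OF insert(1,2), of src tgt "\<lambda>x. 0" 1 v] z a_def b_def
      by simp
  qed
  have ind_ok: "(\<forall>x. x \<notin> insert e F \<longrightarrow> ind x = 0) \<and> (\<exists>x\<in>insert e F. ind x \<noteq> 0)"
    unfolding ind_def by auto
  show ?case
  proof (cases "a = b")
    case True
    then show ?thesis using ind_ok bal_ind by (intro exI[of _ ind]) auto
  next
    case ab: False
    show ?thesis
    proof (cases "F = {}")
      case True
      have "{x\<in>insert e F. tgt x = a} = {}" "{x\<in>insert e F. src x = a} = {e}"
        "{x\<in>insert e F. tgt x = b} = {e}" "{x\<in>insert e F. src x = b} = {}"
        using True ab a_def b_def by auto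
      then have "deg src tgt (insert e F) a = 1" "deg src tgt (insert e F) b = 1"
        unfolding deg_def by (simp_all only: card.empty card.insert finite.emptyI empty_iff) simp_all
      then have "a \<notin> C" "b \<notin> C" using insert.prems by auto
      then show ?thesis using ind_ok bal_ind by (intro exI[of _ ind]) auto
    next
      case Fne: False
      define \<sigma> where "\<sigma> = (\<lambda>w. if w = b then a else w)"
      define C' where "C' = (C - {a,b}) \<union> (if a \<in> C \<and> b \<in> C then {a} else {})"
      define src' where "src' = (\<lambda>x. \<sigma> (src x))"
      define tgt' where "tgt' = (\<lambda>x. \<sigma> (tgt x))"
      have sets_other: "{x\<in>F. \<sigma> (f x) = v} = {x\<in>F. f x = v}" if "v \<noteq> a" "v \<noteq> b" for f :: "'a \<Rightarrow> 'b" and v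
        using that unfolding \<sigma>_def by auto
      have sets_a: "{x\<in>F. \<sigma> (f x) = a} = {x\<in>F. f x = a} \<union> {x\<in>F. f x = b}" for f :: "'a \<Rightarrow> 'b"
        unfolding \<sigma>_def by auto
      have disj: "{x\<in>F. f x = a} \<inter> {x\<in>F. f x = b} = {}" for f :: "'a \<Rightarrow> 'b"
        using ab by auto
      have degE_other: "deg src tgt (insert e F) v = deg src tgt F v" if "v \<noteq> a" "v \<noteq> b" for v
      proof -
        have "{x\<in>insert e F. tgt x = v} = {x\<in>F. tgt x = v}" "{x\<in>insert e F. src x = v} = {x\<in>F. src x = v}"
          using that a_def b_def by auto
        then show ?thesis unfolding deg_def by simp
      qed
      have degE_a: "deg src tgt (insert e F) a = deg src tgt F a + 1"
      proof -
        have "{x\<in>insert e F. tgt x = a} = {x\<in>F. tgt x = a}" "{x\<in>insert e F. src x = a} = insert e {x\<in>F. src x = a}"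
          using ab a_def b_def by auto
        then show ?thesis unfolding deg_def using insert(1,2) by simp
      qed
      have degE_b: "deg src tgt (insert e F) b = deg src tgt F b + 1"
      proof -
        have "{x\<in>insert e F. src x = b} = {x\<in>F. src x = b}" "{x\<in>insert e F. tgt x = b} = insert e {x\<in>F. tgt x = b}"
          using ab a_def b_def by auto
        then show ?thesis unfolding deg_def using insert(1,2) by simp
      qed
      have deg'_a: "deg src' tgt' F a = deg src tgt F a + deg src tgt F b"
      proof -
        have "card {x\<in>F. tgt' x = a} = card {x\<in>F. tgt x = a} + card {x\<in>F. tgt x = b}"
          unfolding tgt'_def sets_a using insert(1) disj by (simp add: card_Un_disjoint)
        moreover have "card {x\<in>F. src' x = a} = card {x\<in>F. src x = a} + card {x\<in>F. src x = b}"
          unfolding src'_def sets_a using insert(1) disj by (simp add: card_Un_disjoint)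
        ultimately show ?thesis unfolding deg_def by simp
      qed
      have "\<forall>v\<in>C'. deg src' tgt' F v \<noteq> 1"
      proof
        fix v assume v: "v \<in> C'"
        show "deg src' tgt' F v \<noteq> 1"
        proof (cases "v = a")
          case True
          then have "a \<in> C" "b \<in> C" using v ab unfolding C'_def by (auto split: if_splits)
          then have "deg src tgt F a \<noteq> 0" "deg src tgt F b \<noteq> 0"
            using insert.prems(2) degE_a degE_b by auto
          then show ?thesis using deg'_a True by simp
        next
          case False
          then have vb: "v \<noteq> b" "v \<in> C" using v unfolding C'_def by (auto split: if_splits)
          have "deg src' tgt' F v = deg src tgt F v"
            unfolding deg_def src'_def tgt'_def using sets_other[OF False vb(1)] by simp
          then show ?thesis using degE_other[OF False vb(1)] insert.prems(2) vb(2) by metis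
        qed
      qed
      from insert.IH[OF Fne this] obtain d' where d':
        "\<forall>x. x \<notin> F \<longrightarrow> d' x = 0" "\<exists>x\<in>F. d' x \<noteq> 0" "\<forall>v\<in>C'. bal src' tgt' F d' v = 0"
        by blast
      have bal'_other: "bal src' tgt' F d' v = bal src tgt F d' v" if "v \<noteq> a" "v \<noteq> b" for v
        unfolding bal_def src'_def tgt'_def using sets_other[OF that] by simp
      have bal'_a: "bal src' tgt' F d' a = bal src tgt F d' a + bal src tgt F d' b"
      proof -
        have "(\<Sum>x\<in>{x\<in>F. tgt' x = a}. d' x) = (\<Sum>x\<in>{x\<in>F. tgt x = a}. d' x) + (\<Sum>x\<in>{x\<in>F. tgt x = b}. d' x)"
          unfolding tgt'_def sets_a using insert(1) disj by (simp add: sum.union_disjoint)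
        moreover have "(\<Sum>x\<in>{x\<in>F. src' x = a}. d' x) = (\<Sum>x\<in>{x\<in>F. src x = a}. d' x) + (\<Sum>x\<in>{x\<in>F. src x = b}. d' x)"
          unfolding src'_def sets_a using insert(1) disj by (simp add: sum.union_disjoint)
        ultimately show ?thesis unfolding bal_def by simp
      qed
      define t where "t = (if a \<in> C then bal src tgt F d' a else - bal src tgt F d' b)"
      define d where "d = d'(e := t)"
      have balE: "bal src tgt (insert e F) d v = bal src tgt F d' v + (if b = v then t else 0) - (if a = v then t else 0)" for v
        unfolding d_def using bal_insert[OF insert(1,2), of src tgt d' t v] a_def b_def by simp
      have "\<forall>v\<in>C. bal src tgt (insert e F) d v = 0"
      proof
        fix v assume vC: "v \<in> C"
        show "bal src tgt (insert e F) d v = 0"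
        proof (cases "v = a")
          case True then show ?thesis using balE[of v] ab vC t_def by simp
        next
          case va: False
          show ?thesis
          proof (cases "v = b")
            case True
            show ?thesis
            proof (cases "a \<in> C")
              case aC: True
              then have "a \<in> C'" using vC True unfolding C'_def by auto
              then show ?thesis using balE[of v] True ab aC t_def d'(3) bal'_a by simp
            next
              case False
              then show ?thesis using balE[of v] True ab t_def by simp
            qed
          next
            case False
            then have "v \<in> C'" using vC va unfolding C'_def by auto
            then show ?thesis using balE[of v] va False d'(3) bal'_other[OF va False] by simp
          qed
        qed
      qed
      moreover have "\<forall>x. x \<notin> insert e F \<longrightarrow> d x = 0" using d'(1) unfolding d_def by auto
      moreover have "\<exists>x\<in>insert e F. d x \<noteq> 0" using d'(2) insert(2) unfolding d_def by force
      ultimately show ?thesis by blast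
    qed
  qed
qed



lemma bal_split:
  assumes "finite E" "A \<subseteq> E"
  shows "bal src tgt E x v = bal src tgt A x v + bal src tgt (E - A) x v"
proof -
  have h: "(\<Sum>e\<in>{e\<in>E. f e = v}. x e) = (\<Sum>e\<in>{e\<in>A. f e = v}. x e) + (\<Sum>e\<in>{e\<in>E - A. f e = v}. x e)"
    for f :: "'a \<Rightarrow> 'b"
  proof -
    have U: "{e\<in>E. f e = v} = {e\<in>A. f e = v} \<union> {e\<in>E - A. f e = v}" using assms by auto
    have F1: "finite {e\<in>A. f e = v}" using assms by (auto intro: finite_subset[of _ E])
    have F2: "finite {e\<in>E - A. f e = v}" using assms by auto
    have D: "{e\<in>A. f e = v} \<inter> {e\<in>E - A. f e = v} = {}" by auto
    show ?thesis unfolding U by (rule sum.union_disjoint[OF F1 F2 D])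
  qed
  show ?thesis unfolding bal_def h[of tgt] h[of src] by simp
qed

lemma bal_lin: "bal src tgt E (\<lambda>e. x e + t * d e) v = bal src tgt E x v + t * bal src tgt E d v"
  unfolding bal_def by (simp add: sum.distrib sum_distrib_left algebra_simps)

lemma bal_zero_outside:
  assumes "finite E" "A \<subseteq> E" "\<forall>e. e \<notin> A \<longrightarrow> d e = 0"
  shows "bal src tgt E d v = bal src tgt A d v"
proof -
  have "bal src tgt (E - A) d v = 0" unfolding bal_def using assms(3) by simp
  then show ?thesis using bal_split[OF assms(1,2), of src tgt d v] by simp
qed

lemma bal_ints: "(\<forall>e\<in>E. x e \<in> \<int>) \<Longrightarrow> bal src tgt E x v \<in> \<int>"
  unfolding bal_def by (intro Ints_diff Ints_sum) auto

lemma frac_deg: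
  assumes "finite E" "bal src tgt E x v = 0"
  shows "deg src tgt {e\<in>E. x e \<notin> \<int>} v \<noteq> 1"
proof
  define Ef where "Ef = {e\<in>E. x e \<notin> \<int>}"
  assume "deg src tgt {e\<in>E. x e \<notin> \<int>} v = 1"
  then have "deg src tgt Ef v = 1" unfolding Ef_def .
  then have c: "(card {e\<in>Ef. tgt e = v} = 1 \<and> card {e\<in>Ef. src e = v} = 0) \<or>
      (card {e\<in>Ef. tgt e = v} = 0 \<and> card {e\<in>Ef. src e = v} = 1)"
    unfolding deg_def by linarith
  have fin: "finite Ef" using assms(1) unfolding Ef_def by simp
  have "bal src tgt (E - Ef) x v \<in> \<int>" by (rule bal_ints) (auto simp: Ef_def)
  moreover have "bal src tgt E x v = bal src tgt Ef x v + bal src tgt (E - Ef) x v"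
    using bal_split[OF assms(1), of Ef src tgt x v] Ef_def by auto
  ultimately have I: "bal src tgt Ef x v \<in> \<int>" using assms(2)
    by (metis add.inverse_inverse Ints_minus add_eq_0_iff)
  from c obtain e0 where "bal src tgt Ef x v = x e0 \<or> bal src tgt Ef x v = - x e0" "e0 \<in> Ef"
  proof (elim disjE conjE)
    assume a: "card {e\<in>Ef. tgt e = v} = 1" "card {e\<in>Ef. src e = v} = 0"
    then obtain e0 where A: "{e\<in>Ef. tgt e = v} = {e0}" by (auto simp: card_1_singleton_iff)
    have B: "{e\<in>Ef. src e = v} = {}" using a fin by simp
    have "bal src tgt Ef x v = x e0" unfolding bal_def A B by simp
    moreover have "e0 \<in> Ef" using A by blast
    ultimately show ?thesis using that[of e0] by blast
  next
    assume a: "card {e\<in>Ef. tgt e = v} = 0" "card {e\<in>Ef. src e = v} = 1"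
    then obtain e0 where A: "{e\<in>Ef. src e = v} = {e0}" by (auto simp: card_1_singleton_iff)
    have B: "{e\<in>Ef. tgt e = v} = {}" using a fin by simp
    have "bal src tgt Ef x v = - x e0" unfolding bal_def A B by simp
    moreover have "e0 \<in> Ef" using A by blast
    ultimately show ?thesis using that[of e0] by blast
  qed
  then show False using I unfolding Ef_def by (auto dest: Ints_minus)
qed

lemma flow_int_aux:
  assumes fin: "finite E"
    and lin: "\<forall>x d t. obj (\<lambda>e. x e + t * d e) = obj x + t * obj d"
  shows "card {e\<in>E. x e \<notin> \<int>} \<le> N \<Longrightarrow>
    \<forall>e\<in>E. real_of_int (lo e) \<le> x e \<and> x e \<le> real_of_int (up e) \<Longrightarrow>
    \<forall>v\<in>C. bal src tgt E x v = 0 \<Longrightarrow>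
    \<exists>z. (\<forall>e\<in>E. z e \<in> \<int>) \<and> (\<forall>e\<in>E. real_of_int (lo e) \<le> z e \<and> z e \<le> real_of_int (up e)) \<and>
        (\<forall>v\<in>C. bal src tgt E z v = 0) \<and> obj z \<le> obj x"
proof (induction N arbitrary: x)
  case 0
  then have "\<forall>e\<in>E. x e \<in> \<int>" using fin by auto
  then show ?case using 0 by blast
next
  case (Suc N)
  define Ef where "Ef = {e\<in>E. x e \<notin> \<int>}"
  show ?case
  proof (cases "card Ef \<le> N")
    case True then show ?thesis using Suc.IH Suc.prems unfolding Ef_def by blast
  next
    case False
    then have cEf: "card Ef = Suc N" using Suc.prems(1) unfolding Ef_def by simp
    have finEf: "finite Ef" "Ef \<subseteq> E" using fin unfolding Ef_def by auto
    have "Ef \<noteq> {}" using cEf by auto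
    moreover have "\<forall>v\<in>C. deg src tgt Ef v \<noteq> 1"
    proof
      fix v assume "v \<in> C"
      then have "bal src tgt E x v = 0" using Suc.prems(3) by blast
      from frac_deg[OF fin this] show "deg src tgt Ef v \<noteq> 1" unfolding Ef_def .
    qed
    ultimately obtain d where d: "\<forall>e. e \<notin> Ef \<longrightarrow> d e = 0" "\<exists>e\<in>Ef. d e \<noteq> 0"
        "\<forall>v\<in>C. bal src tgt Ef d v = 0"
      using cyc[OF finEf(1)] by blast
    have obj0: "obj (\<lambda>e. 0) = 0"
      using lin[rule_format, of "\<lambda>e. 0" 1 "\<lambda>e. 0"] by simp
    define s :: real where "s = (if obj d \<le> 0 then 1 else -1)"
    define d2 where "d2 = (\<lambda>e. s * d e)"
    have "obj d2 = s * obj d"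
      using lin[rule_format, of "\<lambda>e. 0" s d] obj0 unfolding d2_def by simp
    then have objd2: "obj d2 \<le> 0" unfolding s_def by auto
    have s0: "s \<noteq> 0" unfolding s_def by auto
    have d2out: "\<forall>e. e \<notin> Ef \<longrightarrow> d2 e = 0" using d(1) unfolding d2_def by simp
    have bald2: "\<forall>v\<in>C. bal src tgt E d2 v = 0"
    proof
      fix v assume "v \<in> C"
      have "bal src tgt E d2 v = bal src tgt Ef d2 v" using bal_zero_outside[OF fin finEf(2) d2out] .
      also have "\<dots> = s * bal src tgt Ef d v" unfolding bal_def d2_def
        by (simp add: sum_distrib_left right_diff_distrib)
      finally show "bal src tgt E d2 v = 0" using d(3) \<open>v \<in> C\<close> by simp
    qed
    define D where "D = {e\<in>E. d2 e \<noteq> 0}"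
    have DEf: "D \<subseteq> Ef" using d2out unfolding D_def by auto
    have finD: "finite D" using fin unfolding D_def by simp
    have Dne: "D \<noteq> {}" using d(2) s0 finEf(2) unfolding D_def d2_def by auto
    define gap where "gap = (\<lambda>e. if d2 e > 0 then (of_int (ceiling (x e)) - x e) / d2 e
                               else (x e - of_int (floor (x e))) / (- d2 e))"
    have frac: "of_int (floor (x e)) < x e \<and> x e < of_int (ceiling (x e))" if "e \<in> Ef" for e
    proof -
      have "x e \<notin> \<int>" using that unfolding Ef_def by simp
      then have "x e \<noteq> of_int (floor (x e))" "x e \<noteq> of_int (ceiling (x e))" by (metis Ints_of_int)+
      moreover have "of_int (floor (x e)) \<le> x e" "x e \<le> of_int (ceiling (x e))" by linarith+
      ultimately show ?thesis by linarith
    qed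
    have gpos: "gap e > 0" if "e \<in> D" for e
      using frac[of e] that DEf unfolding gap_def D_def by (auto intro!: divide_pos_pos divide_pos_neg)
    define t where "t = Min (gap ` D)"
    have tmem: "t \<in> gap ` D" unfolding t_def using finD Dne by simp
    then obtain e0 where e0: "e0 \<in> D" "t = gap e0" by auto
    have tle: "t \<le> gap e" if "e \<in> D" for e unfolding t_def using finD that by simp
    have tpos: "t > 0" using gpos e0 by simp
    define x' where "x' = (\<lambda>e. x e + t * d2 e)"
    have x'bal: "\<forall>v\<in>C. bal src tgt E x' v = 0"
      using Suc.prems(3) bald2 unfolding x'_def bal_lin by simp
    have x'obj: "obj x' \<le> obj x"
      using lin[rule_format, of x t d2] tpos objd2 unfolding x'_def
      by (simp add: mult_nonneg_nonpos)
    have x'rng: "of_int (floor (x e)) \<le> x' e \<and> x' e \<le> of_int (ceiling (x e))" if "e \<in> E" for e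
    proof (cases "e \<in> D")
      case False
      then have "d2 e = 0" using that unfolding D_def by simp
      then show ?thesis unfolding x'_def by (simp add: of_int_floor_le le_of_int_ceiling)
    next
      case True
      have g: "t \<le> gap e" using tle True .
      show ?thesis
      proof (cases "d2 e > 0")
        case True
        have "t * d2 e \<le> gap e * d2 e" using g True by (simp add: mult_right_mono)
        also have "\<dots> = of_int (ceiling (x e)) - x e" unfolding gap_def using True by simp
        finally show ?thesis unfolding x'_def using True tpos
          by (smt (verit) mult_pos_pos of_int_floor_le)
      next
        case False
        then have neg: "d2 e < 0" using \<open>e \<in> D\<close> unfolding D_def by auto
        have "gap e * d2 e \<le> t * d2 e" using g neg by (simp add: mult_right_mono_neg)
        moreover have "gap e * d2 e = - (x e - of_int (floor (x e)))" unfolding gap_def using neg by simp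
        ultimately show ?thesis unfolding x'_def using neg tpos
          by (smt (verit) mult_pos_neg le_of_int_ceiling)
      qed
    qed
    have x'e0: "x' e0 \<in> \<int>"
    proof (cases "d2 e0 > 0")
      case True
      then have "x' e0 = of_int (ceiling (x e0))" unfolding x'_def e0(2) gap_def by simp
      then show ?thesis by simp
    next
      case False
      then have "d2 e0 < 0" using e0(1) unfolding D_def by auto
      then have "x' e0 = of_int (floor (x e0))" unfolding x'_def e0(2) gap_def by simp
      then show ?thesis by simp
    qed
    have x'bnd: "\<forall>e\<in>E. real_of_int (lo e) \<le> x' e \<and> x' e \<le> real_of_int (up e)"
    proof
      fix e assume eE: "e \<in> E"
      have "lo e \<le> floor (x e)" using Suc.prems(2) eE by (simp add: le_floor_iff)
      moreover have "ceiling (x e) \<le> up e" using Suc.prems(2) eE by (simp add: ceiling_le_iff)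
      ultimately show "real_of_int (lo e) \<le> x' e \<and> x' e \<le> real_of_int (up e)"
        using x'rng[OF eE] by (smt (verit) of_int_le_iff)
    qed
    have "{e\<in>E. x' e \<notin> \<int>} \<subseteq> Ef - {e0}"
    proof
      fix e assume e: "e \<in> {e\<in>E. x' e \<notin> \<int>}"
      have "e \<in> Ef"
      proof (rule ccontr)
        assume "e \<notin> Ef"
        then have "d2 e = 0" "x e \<in> \<int>" using d2out e unfolding Ef_def by auto
        then show False using e unfolding x'_def by simp
      qed
      moreover have "e \<noteq> e0" using e x'e0 by auto
      ultimately show "e \<in> Ef - {e0}" by simp
    qed
    then have "card {e\<in>E. x' e \<notin> \<int>} \<le> card (Ef - {e0})"
      using finEf by (intro card_mono) auto
    also have "\<dots> = N"
    proof -
      have "e0 \<in> Ef" using e0(1) DEf by blast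
      then show ?thesis using cEf finEf(1) by (simp add: card_Diff_singleton)
    qed
    finally obtain z where "(\<forall>e\<in>E. z e \<in> \<int>) \<and> (\<forall>e\<in>E. real_of_int (lo e) \<le> z e \<and> z e \<le> real_of_int (up e)) \<and>
        (\<forall>v\<in>C. bal src tgt E z v = 0) \<and> obj z \<le> obj x'"
      using Suc.IH x'bnd x'bal by blast
    then show ?thesis using x'obj by force
  qed
qed




lemma flow_int_io:
  fixes In Out :: "'v \<Rightarrow> 'e set" and x :: "'e \<Rightarrow> real"
  assumes fin: "finite E" and sub: "\<forall>v\<in>C. In v \<subseteq> E \<and> Out v \<subseteq> E"
    and uIn: "\<forall>v\<in>C. \<forall>w\<in>C. \<forall>e. e \<in> In v \<longrightarrow> e \<in> In w \<longrightarrow> v = w"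
    and uOut: "\<forall>v\<in>C. \<forall>w\<in>C. \<forall>e. e \<in> Out v \<longrightarrow> e \<in> Out w \<longrightarrow> v = w"
    and bnd: "\<forall>e\<in>E. real_of_int (lo e) \<le> x e \<and> x e \<le> real_of_int (up e)"
    and eq: "\<forall>v\<in>C. (\<Sum>e\<in>In v. x e) - (\<Sum>e\<in>Out v. x e) = 0"
    and lin: "\<forall>x d t. obj (\<lambda>e. x e + t * d e) = obj x + t * obj d"
  shows "\<exists>z. (\<forall>e\<in>E. z e \<in> \<int>) \<and> (\<forall>e\<in>E. real_of_int (lo e) \<le> z e \<and> z e \<le> real_of_int (up e)) \<and>
        (\<forall>v\<in>C. (\<Sum>e\<in>In v. z e) - (\<Sum>e\<in>Out v. z e) = 0) \<and> obj z \<le> obj x"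
proof -
  define tgt where "tgt = (\<lambda>e. if \<exists>v\<in>C. e \<in> In v then Some (THE v. v \<in> C \<and> e \<in> In v) else None)"
  define src where "src = (\<lambda>e. if \<exists>v\<in>C. e \<in> Out v then Some (THE v. v \<in> C \<and> e \<in> Out v) else None)"
  have tgt_eq: "{e\<in>E. tgt e = Some v} = In v" if "v \<in> C" for v
  proof
    show "{e\<in>E. tgt e = Some v} \<subseteq> In v"
    proof
      fix e assume "e \<in> {e\<in>E. tgt e = Some v}"
      then have ex: "\<exists>w\<in>C. e \<in> In w" and th: "(THE w. w \<in> C \<and> e \<in> In w) = v"
        unfolding tgt_def by (auto split: if_splits)
      from ex obtain w where w: "w \<in> C" "e \<in> In w" by blast
      have "(THE w. w \<in> C \<and> e \<in> In w) = w" using w uIn by (intro the_equality) blast+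
      then show "e \<in> In v" using th w by simp
    qed
  next
    show "In v \<subseteq> {e\<in>E. tgt e = Some v}"
    proof
      fix e assume e: "e \<in> In v"
      have "(THE w. w \<in> C \<and> e \<in> In w) = v" using e that uIn by (intro the_equality) blast+
      then show "e \<in> {e\<in>E. tgt e = Some v}" using e that sub unfolding tgt_def by auto
    qed
  qed
  have src_eq: "{e\<in>E. src e = Some v} = Out v" if "v \<in> C" for v
  proof
    show "{e\<in>E. src e = Some v} \<subseteq> Out v"
    proof
      fix e assume "e \<in> {e\<in>E. src e = Some v}"
      then have ex: "\<exists>w\<in>C. e \<in> Out w" and th: "(THE w. w \<in> C \<and> e \<in> Out w) = v"
        unfolding src_def by (auto split: if_splits)
      from ex obtain w where w: "w \<in> C" "e \<in> Out w" by blast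
      have "(THE w. w \<in> C \<and> e \<in> Out w) = w" using w uOut by (intro the_equality) blast+
      then show "e \<in> Out v" using th w by simp
    qed
  next
    show "Out v \<subseteq> {e\<in>E. src e = Some v}"
    proof
      fix e assume e: "e \<in> Out v"
      have "(THE w. w \<in> C \<and> e \<in> Out w) = v" using e that uOut by (intro the_equality) blast+
      then show "e \<in> {e\<in>E. src e = Some v}" using e that sub unfolding src_def by auto
    qed
  qed
  have balv: "bal src tgt E f (Some v) = (\<Sum>e\<in>In v. f e) - (\<Sum>e\<in>Out v. f e)" if "v \<in> C" for v f
    unfolding bal_def tgt_eq[OF that] src_eq[OF that] ..
  have "\<forall>v\<in>Some ` C. bal src tgt E x v = 0" using eq balv by auto
  from flow_int_aux[OF fin lin order.refl bnd this] obtain z where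
    z: "(\<forall>e\<in>E. z e \<in> \<int>)" "(\<forall>e\<in>E. real_of_int (lo e) \<le> z e \<and> z e \<le> real_of_int (up e))"
       "(\<forall>v\<in>Some ` C. bal src tgt E z v = 0)" "obj z \<le> obj x" by blast
  then show ?thesis using balv by (intro exI[of _ z]) auto
qed




lemma succs_partition:
  assumes tr: "is_tree T" and fA: "finite A" and TA: "T \<subseteq> Pow A" and sg: "\<forall>j\<in>A. {j} \<in> T"
    and I: "I \<in> T" and ns: "\<not> is_singleton_set I"
  shows "\<Union>(succs T I) = I" "\<forall>K\<in>succs T I. \<forall>K'\<in>succs T I. K \<noteq> K' \<longrightarrow> K \<inter> K' = {}"
    "finite (succs T I)"
proof -
  have finT: "finite T" using finite_subset[OF TA] fA by simp
  show "finite (succs T I)" using finT unfolding succs_def by simp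
  show "\<Union>(succs T I) = I"
  proof
    show "\<Union>(succs T I) \<subseteq> I" unfolding succs_def is_pred_def by auto
  next
    show "I \<subseteq> \<Union>(succs T I)"
    proof
      fix j assume j: "j \<in> I"
      define M where "M = {M\<in>T. j \<in> M \<and> M \<subset> I}"
      have jA: "j \<in> A" using j I TA by auto
      have "{j} \<subset> I" using j ns unfolding is_singleton_set_def by auto
      then have jM: "{j} \<in> M" unfolding M_def using sg jA by auto
      have finM: "finite M" using finT unfolding M_def by simp
      define c where "c = Max (card ` M)"
      have "c \<in> card ` M" unfolding c_def using finM jM by (intro Max_in) auto
      then obtain K where K: "K \<in> M" "card K = c" by auto
      have cmax: "card K' \<le> card K" if "K' \<in> M" for K'
        using K(2) finM that unfolding c_def by simp
      have "is_pred T K I"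
        unfolding is_pred_def
      proof (intro conjI)
        show "I \<in> T" using I .
        show "K \<subset> I" using K(1) unfolding M_def by simp
        show "\<not> (\<exists>M'\<in>T. K \<subset> M' \<and> M' \<subset> I)"
        proof
          assume "\<exists>M'\<in>T. K \<subset> M' \<and> M' \<subset> I"
          then obtain M' where M': "M' \<in> T" "K \<subset> M'" "M' \<subset> I" by blast
          then have "M' \<in> M" using K(1) unfolding M_def by auto
          moreover have "finite M'" using M'(1) TA fA by (meson PowD finite_subset subsetD)
          ultimately show False using cmax[of M'] psubset_card_mono[OF _ M'(2)] by simp
        qed
      qed
      then have "K \<in> succs T I" using K(1) unfolding succs_def M_def by simp
      then show "j \<in> \<Union>(succs T I)" using K(1) unfolding M_def by auto
    qed
  qed
  show "\<forall>K\<in>succs T I. \<forall>K'\<in>succs T I. K \<noteq> K' \<longrightarrow> K \<inter> K' = {}"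
  proof (intro ballI impI)
    fix K K' assume K: "K \<in> succs T I" and K': "K' \<in> succs T I" and ne: "K \<noteq> K'"
    show "K \<inter> K' = {}"
    proof (rule ccontr)
      assume "K \<inter> K' \<noteq> {}"
      then have "K \<subseteq> K' \<or> K' \<subseteq> K" using tr K K' unfolding is_tree_def succs_def by auto
      then show False using K K' ne unfolding succs_def is_pred_def by auto
    qed
  qed
qed

lemma sum_succs:
  assumes tr: "is_tree T" and fA: "finite A" and TA: "T \<subseteq> Pow A" and sg: "\<forall>j\<in>A. {j} \<in> T"
    and I: "I \<in> T" and ns: "\<not> is_singleton_set I"
  shows "(\<Sum>j\<in>I. f j) = (\<Sum>K\<in>succs T I. \<Sum>j\<in>K. f j)"
proof -
  note P = succs_partition[OF assms]
  have fK: "\<forall>K\<in>succs T I. finite K" using TA fA unfolding succs_def by (auto intro: finite_subset)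
  have "(\<Sum>j\<in>\<Union>((\<lambda>K. K) ` succs T I). f j) = (\<Sum>K\<in>succs T I. \<Sum>j\<in>K. f j)"
    by (rule sum.UNION_disjoint[OF P(3) fK P(2)])
  then show ?thesis using P(1) by simp
qed

lemma pred_unique:
  assumes "is_tree T" "K \<noteq> {}" "is_pred T K L" "is_pred T K L'"
  shows "L = L'"
proof -
  have "L \<inter> L' \<noteq> {}" using assms(2-4) unfolding is_pred_def by auto
  then have "L \<subseteq> L' \<or> L' \<subseteq> L" using assms(1,3,4) unfolding is_tree_def is_pred_def by auto
  then show ?thesis using assms(3,4) unfolding is_pred_def by auto
qed

lemma succ_ne:
  assumes "T \<subseteq> Pow A" "\<forall>j\<in>A. {j} \<in> T" "\<not> is_singleton_set L" "L \<in> T" "K \<in> succs T L"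
  shows "K \<noteq> {}"
proof
  assume K: "K = {}"
  then have "L \<noteq> {}" using assms(5) unfolding succs_def is_pred_def by auto
  then obtain j where j: "j \<in> L" by auto
  then have "{j} \<in> T" using assms(1,2,4) by auto
  moreover have "{j} \<subset> L" using j assms(3) unfolding is_singleton_set_def by auto
  ultimately show False using assms(5) K unfolding succs_def is_pred_def by auto
qed

lemma real_floor_Ints: "(x::real) \<in> \<int> \<Longrightarrow> real_of_int \<lfloor>x\<rfloor> = x"
  by (metis Ints_cases floor_of_int)

definition CC :: "nat \<Rightarrow> (nat \<Rightarrow> nat set set) \<Rightarrow> (nat \<times> nat set) option set" where
  "CC n T = {Some (i, I) | i I. i \<le> n \<and> I \<in> T i \<and> \<not> is_singleton_set I} \<union> {None}"

definition Inn :: "nat \<Rightarrow> nat \<Rightarrow> (nat \<Rightarrow> nat) \<Rightarrow> (nat \<Rightarrow> nat set set) \<Rightarrow> (nat \<times> nat set) option \<Rightarrow> nat set set" where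
  "Inn n m kk T v = (case v of None \<Rightarrow> Rset m kk ` {1..n}
     | Some (i, I) \<Rightarrow> if i = 0 then {I} else succs (T i) I)"

definition Outt :: "nat \<Rightarrow> nat \<Rightarrow> (nat \<Rightarrow> nat) \<Rightarrow> (nat \<Rightarrow> nat set set) \<Rightarrow> (nat \<times> nat set) option \<Rightarrow> nat set set" where
  "Outt n m kk T v = (case v of None \<Rightarrow> {Rset m kk 0}
     | Some (i, I) \<Rightarrow> if i = 0 then succs (T 0) I else {I})"

locale am =
  fixes n m :: nat and kk :: "nat \<Rightarrow> nat" and T :: "nat \<Rightarrow> nat set set" and l u :: "nat set \<Rightarrow> int"
  assumes n2: "n \<ge> 2" and AM: "assignment_message n m kk T l u"
begin

abbreviation R where "R \<equiv> Rset m kk"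

lemma R0: "R 0 = Jset m" by (simp add: Rset_def)
lemma Rsub: "R i \<subseteq> Jset m" by (auto simp: Rset_def)
lemma finJ: "finite (Jset m)" by (simp add: Jset_def)
lemma finR: "finite (R i)" using Rsub finJ by (rule finite_subset)
lemma AMp: "(\<forall>j\<in>Jset m. kk j \<in> {1..n}) \<and>
     (\<forall>i\<in>{1..n}. Rset m kk i \<noteq> {}) \<and>
     is_tree (T 0) \<and> T 0 \<subseteq> Pow (Jset m) \<and> Jset m \<in> T 0 \<and> (\<forall>j\<in>Jset m. {j} \<in> T 0) \<and>
     (\<forall>i\<in>{1..n}. is_tree (T i) \<and> T i \<subseteq> Pow (Rset m kk i) \<and> Rset m kk i \<in> T i \<and>
        (\<forall>j\<in>Rset m kk i. {j} \<in> T i)) \<and>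
     (\<forall>I\<in>Ifam n T. l I \<le> 0 \<and> 0 \<le> u I) \<and>
     (\<forall>i\<in>{1..n}. T 0 \<inter> T i = {{j} | j. j \<in> Rset m kk i}) \<and>
     (\<forall>i\<in>{1..n}. \<forall>k\<in>{1..n}. i \<noteq> k \<longrightarrow> T i \<inter> T k = {})"
  using AM unfolding assignment_message_def .

lemma AM1: "\<forall>j\<in>Jset m. kk j \<in> {1..n}" using AMp by (rule conjunct1)
lemma AM2: "\<forall>i\<in>{1..n}. R i \<noteq> {}" using AMp by (elim conjE)
lemma AM3: "is_tree (T 0)" using AMp by (elim conjE)
lemma AM4: "T 0 \<subseteq> Pow (Jset m)" using AMp by (elim conjE)
lemma AM5: "Jset m \<in> T 0" using AMp by (elim conjE)
lemma AM6: "\<forall>j\<in>Jset m. {j} \<in> T 0" using AMp by (elim conjE)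
lemma AM7: "\<forall>i\<in>{1..n}. is_tree (T i) \<and> T i \<subseteq> Pow (R i) \<and> R i \<in> T i \<and> (\<forall>j\<in>R i. {j} \<in> T i)"
  using AMp by (elim conjE)
lemma AM9: "\<forall>i\<in>{1..n}. T 0 \<inter> T i = {{j} | j. j \<in> R i}" using AMp by (elim conjE)
lemma AM10: "\<forall>i\<in>{1..n}. \<forall>k\<in>{1..n}. i \<noteq> k \<longrightarrow> T i \<inter> T k = {}" using AMp by (elim conjE)

lemma kk_range: "j \<in> Jset m \<Longrightarrow> kk j \<in> {1..n}" using AM1 by blast
lemma R_ne: "i \<in> {1..n} \<Longrightarrow> R i \<noteq> {}" using AM2 by blast
lemma Ri: "i \<in> {1..n} \<Longrightarrow> R i = {j \<in> Jset m. kk j = i}" by (auto simp: Rset_def)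
lemma tree: "i \<le> n \<Longrightarrow> is_tree (T i)"
proof (cases "i = 0")
  case True then show ?thesis using AM3 by simp
next
  case False then show "i \<le> n \<Longrightarrow> ?thesis" using AM7 by auto
qed
lemma Tsub: "i \<le> n \<Longrightarrow> T i \<subseteq> Pow (R i)"
proof (cases "i = 0")
  case True then show ?thesis using AM4 R0 by simp
next
  case False then show "i \<le> n \<Longrightarrow> ?thesis" using AM7 by auto
qed
lemma root: "i \<le> n \<Longrightarrow> R i \<in> T i"
proof (cases "i = 0")
  case True then show ?thesis using AM5 R0 by simp
next
  case False then show "i \<le> n \<Longrightarrow> ?thesis" using AM7 by auto
qed
lemma sing: "i \<le> n \<Longrightarrow> \<forall>j\<in>R i. {j} \<in> T i"
proof (cases "i = 0")
  case True then show ?thesis using AM6 R0 by simp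
next
  case False then show "i \<le> n \<Longrightarrow> ?thesis" using AM7 by auto
qed
lemma F1: "i \<in> {1..n} \<Longrightarrow> X \<in> T 0 \<Longrightarrow> X \<in> T i \<Longrightarrow> is_singleton_set X"
proof -
  assume a: "i \<in> {1..n}" "X \<in> T 0" "X \<in> T i"
  have e: "T 0 \<inter> T i = {{j} | j. j \<in> R i}" using AM9 a(1) by (rule bspec)
  have "X \<in> T 0 \<inter> T i" using a by simp
  then have "X \<in> {{j} | j. j \<in> R i}" unfolding e .
  then show ?thesis unfolding is_singleton_set_def by auto
qed
lemma F2: "i \<in> {1..n} \<Longrightarrow> k \<in> {1..n} \<Longrightarrow> X \<in> T i \<Longrightarrow> X \<in> T k \<Longrightarrow> i = k"
proof (rule ccontr)
  assume a: "i \<in> {1..n}" "k \<in> {1..n}" "X \<in> T i" "X \<in> T k" "i \<noteq> k"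
  then have "T i \<inter> T k = {}" using AM10 by blast
  then show False using a by blast
qed

lemma Ifam_iff: "I \<in> Ifam n T \<longleftrightarrow> (\<exists>i\<le>n. I \<in> T i)" by (auto simp: Ifam_def)
lemma Ifam_sub: "I \<in> Ifam n T \<Longrightarrow> I \<subseteq> Jset m"
  using Tsub Rsub unfolding Ifam_iff by blast
lemma finIfam: "finite (Ifam n T)"
proof -
  have "Ifam n T \<subseteq> Pow (Jset m)" using Ifam_sub by blast
  from finite_subset[OF this] show ?thesis using finJ by simp
qed
lemma sing_J: "j \<in> Jset m \<Longrightarrow> {j} \<in> Ifam n T"
  using sing[of 0] unfolding Ifam_iff R0 by auto

lemma J_nonsing: "\<not> is_singleton_set (Jset m)"
proof
  assume "is_singleton_set (Jset m)"
  then obtain a where a: "Jset m = {a}" unfolding is_singleton_set_def by auto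
  have "R 1 \<noteq> {}" "R 2 \<noteq> {}" using R_ne n2 by auto
  then have "a \<in> R 1" "a \<in> R 2" using Rsub[of 1] Rsub[of 2] a by auto
  then show False by (auto simp: Rset_def)
qed

lemma sumR: "(\<Sum>i\<in>{1..n}. \<Sum>j\<in>R i. f j) = (\<Sum>j\<in>Jset m. f j)"
proof -
  have "(\<Sum>i\<in>{1..n}. \<Sum>j\<in>R i. f j) = (\<Sum>i\<in>{1..n}. sum f {j. j \<in> Jset m \<and> kk j = i})"
    by (intro sum.cong) (auto simp: Ri)
  also have "\<dots> = sum f (Jset m)"
    using kk_range by (intro sum.group) (auto simp: finJ)
  finally show ?thesis .
qed

lemma sum_succs_i:
  "i \<le> n \<Longrightarrow> I \<in> T i \<Longrightarrow> \<not> is_singleton_set I \<Longrightarrow> (\<Sum>j\<in>I. f j) = (\<Sum>K\<in>succs (T i) I. \<Sum>j\<in>K. f j)"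
  using sum_succs[OF tree finR Tsub sing] by blast

lemma decomp:
  assumes F: "mcf_feasible n m kk T l u y" and i: "i \<le> n"
  shows "I \<in> T i \<Longrightarrow> y I = (\<Sum>j\<in>I. y {j})"
proof (induction "card I" arbitrary: I rule: less_induct)
  case less
  show ?case
  proof (cases "is_singleton_set I")
    case True then show ?thesis by (auto simp: is_singleton_set_def)
  next
    case False
    have eq: "y I = (\<Sum>K\<in>succs (T i) I. y K)"
    proof (cases "i = 0")
      case True then show ?thesis using F less.prems False unfolding mcf_feasible_def by auto
    next
      case False2: False
      then have "i \<in> {1..n}" using i by auto
      then show ?thesis using F less.prems False unfolding mcf_feasible_def by auto
    qed
    have finI: "finite I" using less.prems Tsub[OF i] finR by (meson PowD finite_subset subsetD)
    have "\<forall>K\<in>succs (T i) I. y K = (\<Sum>j\<in>K. y {j})"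
    proof
      fix K assume K: "K \<in> succs (T i) I"
      then have "K \<in> T i" "K \<subset> I" unfolding succs_def is_pred_def by auto
      then show "y K = (\<Sum>j\<in>K. y {j})" using less.hyps psubset_card_mono[OF finI] by blast
    qed
    then have "y I = (\<Sum>K\<in>succs (T i) I. \<Sum>j\<in>K. y {j})" using eq by simp
    also have "\<dots> = (\<Sum>j\<in>I. y {j})" using sum_succs_i[OF i less.prems False, where f="\<lambda>j. y {j}"] by simp
    finally show ?thesis .
  qed
qed

lemma decomp_Ifam: "mcf_feasible n m kk T l u y \<Longrightarrow> I \<in> Ifam n T \<Longrightarrow> y I = (\<Sum>j\<in>I. y {j})"
  using decomp unfolding Ifam_iff by blast

lemma build:
  assumes "\<forall>I\<in>Ifam n T. real_of_int (l I) \<le> (\<Sum>j\<in>I. x j) \<and> (\<Sum>j\<in>I. x j) \<le> real_of_int (u I)"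
  shows "mcf_feasible n m kk T l u (\<lambda>I. \<Sum>j\<in>I. x j)"
  unfolding mcf_feasible_def
proof (intro conjI)
  show "\<forall>I\<in>T 0. \<not> is_singleton_set I \<longrightarrow> (\<Sum>j\<in>I. x j) - (\<Sum>K\<in>succs (T 0) I. \<Sum>j\<in>K. x j) = 0"
  proof (intro ballI impI)
    fix I assume "I \<in> T 0" "\<not> is_singleton_set I"
    from sum_succs_i[OF _ this, of x] show "(\<Sum>j\<in>I. x j) - (\<Sum>K\<in>succs (T 0) I. \<Sum>j\<in>K. x j) = 0" by simp
  qed
  show "\<forall>i\<in>{1..n}. \<forall>I\<in>T i. \<not> is_singleton_set I \<longrightarrow> (\<Sum>K\<in>succs (T i) I. \<Sum>j\<in>K. x j) - (\<Sum>j\<in>I. x j) = 0"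
  proof (intro ballI impI)
    fix i I assume i: "i \<in> {1..n}" and "I \<in> T i" "\<not> is_singleton_set I"
    then have "i \<le> n" by simp
    from sum_succs_i[OF this \<open>I \<in> T i\<close> \<open>\<not> is_singleton_set I\<close>, of x]
    show "(\<Sum>K\<in>succs (T i) I. \<Sum>j\<in>K. x j) - (\<Sum>j\<in>I. x j) = 0" by simp
  qed
  show "(\<Sum>i\<in>{1..n}. \<Sum>j\<in>R i. x j) - (\<Sum>j\<in>R 0. x j) = 0"
    using sumR R0 by simp
  show "\<forall>I\<in>Ifam n T. real_of_int (l I) \<le> (\<Sum>j\<in>I. x j) \<and> (\<Sum>j\<in>I. x j) \<le> real_of_int (u I)"
    using assms .
qed

lemma obj_eq:
  assumes "\<forall>i\<in>{1..n}. y (R i) = (\<Sum>j\<in>R i. y {j})"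
  shows "mcf_obj n m kk vv p y = (\<Sum>i\<in>{1..n}. p i * y (R i)) - (\<Sum>j\<in>Jset m. vv j * y {j})"
proof -
  have "mcf_obj n m kk vv p y = (\<Sum>i\<in>{1..n}. p i * (\<Sum>j\<in>R i. y {j}) - (\<Sum>j\<in>R i. vv j * y {j}))"
    unfolding mcf_obj_def
    by (intro sum.cong) (auto simp: sum_distrib_left sum_subtractf[symmetric] algebra_simps)
  also have "\<dots> = (\<Sum>i\<in>{1..n}. p i * y (R i)) - (\<Sum>i\<in>{1..n}. \<Sum>j\<in>R i. vv j * y {j})"
    using assms by (simp add: sum_subtractf)
  also have "\<dots> = (\<Sum>i\<in>{1..n}. p i * y (R i)) - (\<Sum>j\<in>Jset m. vv j * y {j})"
    using sumR by simp
  finally show ?thesis .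
qed

lemma int_feas:
  assumes F: "mcf_feasible n m kk T l u y" and Z: "\<forall>I\<in>Ifam n T. y I \<in> \<int>"
  shows "feasible_x n m kk T l u (\<lambda>i. \<lfloor>y (R i)\<rfloor>) (\<lambda>j. \<lfloor>y {j}\<rfloor>)"
    and "mcf_obj n m kk vv p y = (\<Sum>i\<in>{1..n}. p i * real_of_int \<lfloor>y (R i)\<rfloor>)
             - (\<Sum>j\<in>Jset m. vv j * real_of_int \<lfloor>y {j}\<rfloor>)"
proof -
  have fj: "real_of_int \<lfloor>y {j}\<rfloor> = y {j}" if "j \<in> Jset m" for j
    using real_floor_Ints Z sing_J[OF that] by blast
  have yI: "y I = real_of_int (\<Sum>j\<in>I. \<lfloor>y {j}\<rfloor>)" if "I \<in> Ifam n T" for I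
  proof -
    have "y I = (\<Sum>j\<in>I. y {j})" using decomp_Ifam[OF F that] .
    also have "\<dots> = (\<Sum>j\<in>I. real_of_int \<lfloor>y {j}\<rfloor>)" using Ifam_sub[OF that] by (intro sum.cong refl) (metis fj subsetD)
    finally show ?thesis by simp
  qed
  have Rin: "R i \<in> Ifam n T" if "i \<in> {1..n}" for i using root[of i] that unfolding Ifam_iff by auto
  have bnd: "real_of_int (l I) \<le> y I \<and> y I \<le> real_of_int (u I)" if "I \<in> Ifam n T" for I
    using F that unfolding mcf_feasible_def by blast
  show "feasible_x n m kk T l u (\<lambda>i. \<lfloor>y (R i)\<rfloor>) (\<lambda>j. \<lfloor>y {j}\<rfloor>)"
    unfolding feasible_x_def
  proof (intro conjI ballI)
    fix I assume I: "I \<in> Ifam n T"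
    show "l I \<le> (\<Sum>j\<in>I. \<lfloor>y {j}\<rfloor>)" using bnd[OF I] yI[OF I] by linarith
    show "(\<Sum>j\<in>I. \<lfloor>y {j}\<rfloor>) \<le> u I" using bnd[OF I] yI[OF I] by linarith
  next
    fix i assume i: "i \<in> {1..n}"
    show "(\<Sum>j\<in>R i. \<lfloor>y {j}\<rfloor>) = \<lfloor>y (R i)\<rfloor>" using yI[OF Rin[OF i]] by (metis floor_of_int)
  qed
  have Rd: "\<forall>i\<in>{1..n}. y (R i) = (\<Sum>j\<in>R i. y {j})"
  proof
    fix i assume "i \<in> {1..n}"
    from decomp_Ifam[OF F Rin[OF this]] show "y (R i) = (\<Sum>j\<in>R i. y {j})" .
  qed
  have A: "(\<Sum>i\<in>{1..n}. p i * y (R i)) = (\<Sum>i\<in>{1..n}. p i * real_of_int \<lfloor>y (R i)\<rfloor>)"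
  proof (intro sum.cong refl)
    fix i assume "i \<in> {1..n}"
    then have "y (R i) \<in> \<int>" using Z Rin by blast
    then show "p i * y (R i) = p i * real_of_int \<lfloor>y (R i)\<rfloor>" using real_floor_Ints by metis
  qed
  have B: "(\<Sum>j\<in>Jset m. vv j * y {j}) = (\<Sum>j\<in>Jset m. vv j * real_of_int \<lfloor>y {j}\<rfloor>)"
  proof (intro sum.cong refl)
    fix j assume "j \<in> Jset m"
    then show "vv j * y {j} = vv j * real_of_int \<lfloor>y {j}\<rfloor>" using fj by metis
  qed
  from obj_eq[OF Rd, of vv p]
  show "mcf_obj n m kk vv p y = (\<Sum>i\<in>{1..n}. p i * real_of_int \<lfloor>y (R i)\<rfloor>)
             - (\<Sum>j\<in>Jset m. vv j * real_of_int \<lfloor>y {j}\<rfloor>)"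
    by (simp only: A B)
qed

lemma build_int:
  assumes FX: "feasible_x n m kk T l u qq x"
  shows "mcf_feasible n m kk T l u (\<lambda>I. \<Sum>j\<in>I. real_of_int (x j))"
    and "\<forall>I\<in>Ifam n T. (\<Sum>j\<in>I. real_of_int (x j)) \<in> \<int>"
    and "\<forall>j. \<lfloor>\<Sum>j'\<in>{j}. real_of_int (x j')\<rfloor> = x j"
    and "\<forall>i\<in>{1..n}. \<lfloor>\<Sum>j\<in>R i. real_of_int (x j)\<rfloor> = qq i"
proof -
  show "mcf_feasible n m kk T l u (\<lambda>I. \<Sum>j\<in>I. real_of_int (x j))"
  proof (rule build, intro ballI)
    fix I assume "I \<in> Ifam n T"
    then have "l I \<le> (\<Sum>j\<in>I. x j) \<and> (\<Sum>j\<in>I. x j) \<le> u I" using FX unfolding feasible_x_def by blast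
    then show "real_of_int (l I) \<le> (\<Sum>j\<in>I. real_of_int (x j)) \<and> (\<Sum>j\<in>I. real_of_int (x j)) \<le> real_of_int (u I)"
      by (metis of_int_le_iff of_int_sum)
  qed
  show "\<forall>I\<in>Ifam n T. (\<Sum>j\<in>I. real_of_int (x j)) \<in> \<int>" by auto
  show "\<forall>j. \<lfloor>\<Sum>j'\<in>{j}. real_of_int (x j')\<rfloor> = x j" by simp
  show "\<forall>i\<in>{1..n}. \<lfloor>\<Sum>j\<in>R i. real_of_int (x j)\<rfloor> = qq i"
    using FX unfolding feasible_x_def by (metis floor_of_int of_int_sum)
qed

lemma val_fin: "finite {(\<Sum>j\<in>Jset m. vv j * real_of_int (x j)) | x. feasible_x n m kk T l u q x}"
proof -
  let ?f = "\<lambda>g. \<Sum>j\<in>Jset m. vv j * real_of_int (g j)"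
  have "{(\<Sum>j\<in>Jset m. vv j * real_of_int (x j)) | x. feasible_x n m kk T l u q x}
      \<subseteq> ?f ` (PiE (Jset m) (\<lambda>j. {l {j}..u {j}}))"
  proof
    fix v assume "v \<in> {(\<Sum>j\<in>Jset m. vv j * real_of_int (x j)) | x. feasible_x n m kk T l u q x}"
    then obtain x where x: "feasible_x n m kk T l u q x" "v = ?f x" by auto
    have "restrict x (Jset m) \<in> PiE (Jset m) (\<lambda>j. {l {j}..u {j}})"
    proof -
      have "x j \<in> {l {j}..u {j}}" if "j \<in> Jset m" for j
        using x(1) sing_J[OF that] unfolding feasible_x_def by fastforce
      then show ?thesis by auto
    qed
    moreover have "v = ?f (restrict x (Jset m))" using x(2) by simp
    ultimately show "v \<in> ?f ` (PiE (Jset m) (\<lambda>j. {l {j}..u {j}}))" by blast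
  qed
  moreover have "finite (PiE (Jset m) (\<lambda>j. {l {j}..u {j}}))" using finJ by (intro finite_PiE) auto
  ultimately show ?thesis by (meson finite_imageI finite_subset)
qed

lemma val_ge: "feasible_x n m kk T l u q x \<Longrightarrow>
   (\<Sum>j\<in>Jset m. vv j * real_of_int (x j)) \<le> induced_val n m kk vv T l u q"
  unfolding induced_val_def using val_fin by (intro Max_ge) auto

lemma val_att: "q \<in> Qset n m kk T l u \<Longrightarrow>
   \<exists>x. feasible_x n m kk T l u q x \<and> induced_val n m kk vv T l u q = (\<Sum>j\<in>Jset m. vv j * real_of_int (x j))"
proof -
  assume "q \<in> Qset n m kk T l u"
  then have ne: "{(\<Sum>j\<in>Jset m. vv j * real_of_int (x j)) | x. feasible_x n m kk T l u q x} \<noteq> {}"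
    unfolding Qset_def by auto
  have "induced_val n m kk vv T l u q \<in> {(\<Sum>j\<in>Jset m. vv j * real_of_int (x j)) | x. feasible_x n m kk T l u q x}"
    unfolding induced_val_def using val_fin ne by (rule Max_in)
  then show ?thesis by auto
qed


lemma CC_iff: "v \<in> CC n T \<longleftrightarrow> v = None \<or> (\<exists>i I. v = Some (i, I) \<and> i \<le> n \<and> I \<in> T i \<and> \<not> is_singleton_set I)"
  unfolding CC_def by auto

lemma injR: "inj_on R {1..n}"
proof (rule inj_onI)
  fix i k assume i: "i \<in> {1..n}" and k: "k \<in> {1..n}" and e: "R i = R k"
  obtain j where "j \<in> R i" using R_ne[OF i] by auto
  then have "j \<in> R k" using e by simp
  then show "i = k" using \<open>j \<in> R i\<close> i k by (auto simp: Rset_def)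
qed

lemma succ_props: "e \<in> succs S L \<Longrightarrow> e \<in> S \<and> e \<subset> L"
  unfolding succs_def is_pred_def by auto

lemma H_pred:
  assumes i: "i \<le> n" and L: "L \<in> T i" "\<not> is_singleton_set L" and L': "L' \<in> T i" "\<not> is_singleton_set L'"
    and e: "e \<in> succs (T i) L" "e \<in> succs (T i) L'"
  shows "L = L'"
proof -
  have "e \<noteq> {}" using succ_ne[OF Tsub[OF i] sing[OF i] L(2) L(1) e(1)] .
  moreover have "is_pred (T i) e L" "is_pred (T i) e L'" using e unfolding succs_def by auto
  ultimately show ?thesis using pred_unique[OF tree[OF i]] by blast
qed

lemma In_None:
  assumes w: "w \<in> CC n T" and e: "e \<in> Inn n m kk T None" "e \<in> Inn n m kk T w"
  shows "w = None"
proof (rule ccontr)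
  assume "w \<noteq> None"
  then obtain k K where w': "w = Some (k, K)" "k \<le> n" "K \<in> T k" "\<not> is_singleton_set K"
    using w unfolding CC_iff by blast
  obtain i0 where i0: "i0 \<in> {1..n}" "e = R i0" using e(1) unfolding Inn_def by auto
  have Ri0: "R i0 \<in> T i0" using root i0 by auto
  show False
  proof (cases "k = 0")
    case True
    then have "e = K" using e(2) w' unfolding Inn_def by simp
    then show False using F1[OF i0(1) _ Ri0] w' True i0 by simp
  next
    case False
    then have k: "k \<in> {1..n}" using w' by simp
    have "e \<in> succs (T k) K" using e(2) w' False unfolding Inn_def by simp
    then have "e \<in> T k" "e \<subset> K" using succ_props by blast+
    then have "i0 = k" using F2[OF i0(1) k Ri0] i0 by simp
    moreover have "K \<subseteq> R k" using Tsub[of k] w' by auto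
    ultimately show False using \<open>e \<subset> K\<close> i0 by auto
  qed
qed

lemma In_Some:
  assumes i: "i \<le> n" "I \<in> T i" "\<not> is_singleton_set I" and k: "k \<le> n" "K \<in> T k" "\<not> is_singleton_set K"
    and e: "e \<in> Inn n m kk T (Some (i, I))" "e \<in> Inn n m kk T (Some (k, K))"
  shows "i = k \<and> I = K"
proof -
  have mix: False if "a = 0" "b \<noteq> 0" "b \<le> n" "A \<in> T 0" "\<not> is_singleton_set A"
      "e \<in> Inn n m kk T (Some (a, A))" "e \<in> Inn n m kk T (Some (b, B))" for a b A B
  proof -
    have "e = A" using that unfolding Inn_def by simp
    moreover have "e \<in> T b" using that succ_props unfolding Inn_def by auto
    ultimately show False using F1[of b A] that by auto
  qed
  show ?thesis
  proof (cases "i = 0")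
    case True
    show ?thesis
    proof (cases "k = 0")
      case True
      then show ?thesis using e \<open>i = 0\<close> unfolding Inn_def by simp
    next
      case False then show ?thesis using mix[OF \<open>i = 0\<close> False k(1) _ i(3) e] i(2) \<open>i = 0\<close> by simp
    qed
  next
    case False
    show ?thesis
    proof (cases "k = 0")
      case True then show ?thesis using mix[OF True False i(1) _ k(3) e(2) e(1)] k(2) by simp
    next
      case k0: False
      have e1: "e \<in> succs (T i) I" "e \<in> succs (T k) K" using e False k0 unfolding Inn_def by auto
      then have "e \<in> T i" "e \<in> T k" using succ_props by blast+
      then have ik: "i = k" using F2[of i k e] False k0 i k by simp
      then have "I = K" using H_pred[OF i(1) i(2,3)] k e1 by simp
      then show ?thesis using ik by simp
    qed
  qed
qed

lemma Out_None:
  assumes w: "w \<in> CC n T" and e: "e \<in> Outt n m kk T None" "e \<in> Outt n m kk T w"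
  shows "w = None"
proof (rule ccontr)
  assume "w \<noteq> None"
  then obtain k K where w': "w = Some (k, K)" "k \<le> n" "K \<in> T k" "\<not> is_singleton_set K"
    using w unfolding CC_iff by blast
  have eJ: "e = Jset m" using e(1) R0 unfolding Outt_def by simp
  show False
  proof (cases "k = 0")
    case True
    then have "e \<in> succs (T 0) K" using e(2) w' unfolding Outt_def by simp
    then have "e \<subset> K" using succ_props by blast
    moreover have "K \<subseteq> Jset m" using Tsub[of 0] w' True R0 by auto
    ultimately show False using eJ by auto
  next
    case False
    then have "e = K" using e(2) w' unfolding Outt_def by simp
    then show False using F1[of k K] AM5 eJ w' False by simp
  qed
qed

lemma Out_Some:
  assumes i: "i \<le> n" "I \<in> T i" "\<not> is_singleton_set I" and k: "k \<le> n" "K \<in> T k" "\<not> is_singleton_set K"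
    and e: "e \<in> Outt n m kk T (Some (i, I))" "e \<in> Outt n m kk T (Some (k, K))"
  shows "i = k \<and> I = K"
proof -
  have mix: False if "a = 0" "b \<noteq> 0" "b \<le> n" "B \<in> T b" "\<not> is_singleton_set B"
      "e \<in> Outt n m kk T (Some (a, A))" "e \<in> Outt n m kk T (Some (b, B))" for a b A B
  proof -
    have "e = B" using that unfolding Outt_def by simp
    moreover have "e \<in> T 0" using that succ_props unfolding Outt_def by auto
    ultimately show False using F1[of b B] that by auto
  qed
  show ?thesis
  proof (cases "i = 0")
    case True
    show ?thesis
    proof (cases "k = 0")
      case True
      have e1: "e \<in> succs (T 0) I" "e \<in> succs (T 0) K" using e \<open>i = 0\<close> True unfolding Outt_def by auto
      then show ?thesis using H_pred[of 0 I K e] i k \<open>i = 0\<close> True by simp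
    next
      case False then show ?thesis using mix[OF \<open>i = 0\<close> False k e] by simp
    qed
  next
    case False
    show ?thesis
    proof (cases "k = 0")
      case True then show ?thesis using mix[OF True False i e(2) e(1)] by simp
    next
      case k0: False
      have "e = I" "e = K" using e False k0 unfolding Outt_def by auto
      then have "i = k" using F2[of i k e] False k0 i k by simp
      then show ?thesis using \<open>e = I\<close> \<open>e = K\<close> by simp
    qed
  qed
qed

lemma uIn: "\<forall>v\<in>CC n T. \<forall>w\<in>CC n T. \<forall>e. e \<in> Inn n m kk T v \<longrightarrow> e \<in> Inn n m kk T w \<longrightarrow> v = w"
proof (intro ballI allI impI)
  fix v w e assume v: "v \<in> CC n T" and w: "w \<in> CC n T" and e: "e \<in> Inn n m kk T v" "e \<in> Inn n m kk T w"
  show "v = w"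
  proof (cases "v = None")
    case True then show ?thesis using In_None[OF w] e by metis
  next
    case False
    then obtain i I where v': "v = Some (i, I)" "i \<le> n" "I \<in> T i" "\<not> is_singleton_set I"
      using v unfolding CC_iff by blast
    show ?thesis
    proof (cases "w = None")
      case True then show ?thesis using In_None[OF v] e by metis
    next
      case False
      then obtain k K where w': "w = Some (k, K)" "k \<le> n" "K \<in> T k" "\<not> is_singleton_set K"
        using w unfolding CC_iff by blast
      show ?thesis using In_Some[OF v'(2-4) w'(2-4)] e v'(1) w'(1) by simp
    qed
  qed
qed

lemma uOut: "\<forall>v\<in>CC n T. \<forall>w\<in>CC n T. \<forall>e. e \<in> Outt n m kk T v \<longrightarrow> e \<in> Outt n m kk T w \<longrightarrow> v = w"
proof (intro ballI allI impI)
  fix v w e assume v: "v \<in> CC n T" and w: "w \<in> CC n T" and e: "e \<in> Outt n m kk T v" "e \<in> Outt n m kk T w"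
  show "v = w"
  proof (cases "v = None")
    case True then show ?thesis using Out_None[OF w] e by metis
  next
    case False
    then obtain i I where v': "v = Some (i, I)" "i \<le> n" "I \<in> T i" "\<not> is_singleton_set I"
      using v unfolding CC_iff by blast
    show ?thesis
    proof (cases "w = None")
      case True then show ?thesis using Out_None[OF v] e by metis
    next
      case False
      then obtain k K where w': "w = Some (k, K)" "k \<le> n" "K \<in> T k" "\<not> is_singleton_set K"
        using w unfolding CC_iff by blast
      show ?thesis using Out_Some[OF v'(2-4) w'(2-4)] e v'(1) w'(1) by simp
    qed
  qed
qed

lemma sub_io: "\<forall>v\<in>CC n T. Inn n m kk T v \<subseteq> Ifam n T \<and> Outt n m kk T v \<subseteq> Ifam n T"
proof
  fix v assume v: "v \<in> CC n T"
  have Ti: "T i \<subseteq> Ifam n T" if "i \<le> n" for i using that unfolding Ifam_def by auto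
  show "Inn n m kk T v \<subseteq> Ifam n T \<and> Outt n m kk T v \<subseteq> Ifam n T"
  proof (cases "v = None")
    case True
    have "R ` {1..n} \<subseteq> Ifam n T" using root Ti by force
    moreover have "R 0 \<in> Ifam n T" using root[of 0] Ti by auto
    ultimately show ?thesis using True unfolding Inn_def Outt_def by simp
  next
    case False
    then obtain i I where v': "v = Some (i, I)" "i \<le> n" "I \<in> T i" "\<not> is_singleton_set I"
      using v unfolding CC_iff by blast
    have "succs (T i) I \<subseteq> Ifam n T" "I \<in> Ifam n T" using Ti[OF v'(2)] v'(3) succ_props by blast+
    moreover have "succs (T 0) I \<subseteq> Ifam n T" using Ti[of 0] succ_props by blast
    ultimately show ?thesis using v'(1) unfolding Inn_def Outt_def by auto
  qed
qed

lemma eqs_iff: "(\<forall>v\<in>CC n T. (\<Sum>e\<in>Inn n m kk T v. y e) - (\<Sum>e\<in>Outt n m kk T v. y e) = 0) \<longleftrightarrow>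
  ((\<forall>I\<in>T 0. \<not> is_singleton_set I \<longrightarrow> y I - (\<Sum>K\<in>succs (T 0) I. y K) = 0) \<and>
   (\<forall>i\<in>{1..n}. \<forall>I\<in>T i. \<not> is_singleton_set I \<longrightarrow> (\<Sum>K\<in>succs (T i) I. y K) - y I = 0) \<and>
   (\<Sum>i\<in>{1..n}. y (R i)) - y (R 0) = 0)"
  (is "?L \<longleftrightarrow> ?A \<and> ?B \<and> ?C")
proof -
  have N: "(\<Sum>e\<in>Inn n m kk T None. y e) - (\<Sum>e\<in>Outt n m kk T None. y e) = (\<Sum>i\<in>{1..n}. y (R i)) - y (R 0)"
    unfolding Inn_def Outt_def using sum.reindex[OF injR, of y] by simp
  have S: "(\<Sum>e\<in>Inn n m kk T (Some (i, I)). y e) - (\<Sum>e\<in>Outt n m kk T (Some (i, I)). y e) =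
      (if i = 0 then y I - (\<Sum>K\<in>succs (T 0) I. y K) else (\<Sum>K\<in>succs (T i) I. y K) - y I)" for i I
    unfolding Inn_def Outt_def by simp
  have memN: "None \<in> CC n T" unfolding CC_iff by simp
  have memS: "Some (i, I) \<in> CC n T" if "i \<le> n" "I \<in> T i" "\<not> is_singleton_set I" for i I
    unfolding CC_iff using that by blast
  show ?thesis
  proof
    assume H: ?L
    have A: ?A
    proof (intro ballI impI)
      fix I assume IT: "I \<in> T 0" "\<not> is_singleton_set I"
      from H[rule_format, OF memS[OF _ IT]] S[of 0 I]
      show "y I - (\<Sum>K\<in>succs (T 0) I. y K) = 0" by simp
    qed
    have B: ?B
    proof (intro ballI impI)
      fix i I assume i: "i \<in> {1..n}" and IT: "I \<in> T i" "\<not> is_singleton_set I"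
      have "i \<le> n" using i by simp
      from H[rule_format, OF memS[OF this IT]] S[of i I] i
      show "(\<Sum>K\<in>succs (T i) I. y K) - y I = 0" by simp
    qed
    have C: ?C using H[rule_format, OF memN] N by simp
    show "?A \<and> ?B \<and> ?C" using A B C by blast
  next
    assume H: "?A \<and> ?B \<and> ?C"
    show ?L
    proof
      fix v assume v: "v \<in> CC n T"
      show "(\<Sum>e\<in>Inn n m kk T v. y e) - (\<Sum>e\<in>Outt n m kk T v. y e) = 0"
      proof (cases "v = None")
        case True then show ?thesis using H N by simp
      next
        case False
        then obtain i I where v': "v = Some (i, I)" "i \<le> n" "I \<in> T i" "\<not> is_singleton_set I"
          using v unfolding CC_iff by blast
        show ?thesis
        proof (cases "i = 0")
          case True then show ?thesis using H S[of i I] v' by simp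
        next
          case False
          then have "i \<in> {1..n}" using v' by simp
          then show ?thesis using H S[of i I] v' False by simp
        qed
      qed
    qed
  qed
qed

lemma mcf_iff: "mcf_feasible n m kk T l u y \<longleftrightarrow>
   (\<forall>I\<in>Ifam n T. real_of_int (l I) \<le> y I \<and> y I \<le> real_of_int (u I)) \<and>
   (\<forall>v\<in>CC n T. (\<Sum>e\<in>Inn n m kk T v. y e) - (\<Sum>e\<in>Outt n m kk T v. y e) = 0)"
  unfolding mcf_feasible_def eqs_iff R0 by blast

lemma obj_lin: "\<forall>x d t. mcf_obj n m kk vv p (\<lambda>e. x e + t * d e) = mcf_obj n m kk vv p x + t * mcf_obj n m kk vv p d"
proof (intro allI)
  fix x d :: "nat set \<Rightarrow> real" and t :: real
  have "mcf_obj n m kk vv p (\<lambda>e. x e + t * d e) =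
      (\<Sum>i\<in>{1..n}. \<Sum>j\<in>R i. (p i - vv j) * x {j} + t * ((p i - vv j) * d {j}))"
    unfolding mcf_obj_def by (intro sum.cong refl) (simp add: algebra_simps)
  also have "\<dots> = mcf_obj n m kk vv p x + t * mcf_obj n m kk vv p d"
    unfolding mcf_obj_def by (simp add: sum.distrib sum_distrib_left)
  finally show "mcf_obj n m kk vv p (\<lambda>e. x e + t * d e) = mcf_obj n m kk vv p x + t * mcf_obj n m kk vv p d" .
qed

lemma int_opt:
  assumes "mcf_feasible n m kk T l u y"
  shows "\<exists>z. mcf_feasible n m kk T l u z \<and> (\<forall>I\<in>Ifam n T. z I \<in> \<int>) \<and> mcf_obj n m kk vv p z \<le> mcf_obj n m kk vv p y"
proof -
  have bnd: "\<forall>I\<in>Ifam n T. real_of_int (l I) \<le> y I \<and> y I \<le> real_of_int (u I)"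
    and eqs: "\<forall>v\<in>CC n T. (\<Sum>e\<in>Inn n m kk T v. y e) - (\<Sum>e\<in>Outt n m kk T v. y e) = 0"
    using assms unfolding mcf_iff by blast+
  from flow_int_io[OF finIfam sub_io uIn uOut bnd eqs obj_lin] obtain z where
    z: "\<forall>I\<in>Ifam n T. z I \<in> \<int>" "\<forall>I\<in>Ifam n T. real_of_int (l I) \<le> z I \<and> z I \<le> real_of_int (u I)"
       "\<forall>v\<in>CC n T. (\<Sum>e\<in>Inn n m kk T v. z e) - (\<Sum>e\<in>Outt n m kk T v. z e) = 0"
       "mcf_obj n m kk vv p z \<le> mcf_obj n m kk vv p y" by blast
  then show ?thesis unfolding mcf_iff by blast
qed

lemma obj_build:
  assumes FX: "feasible_x n m kk T l u qq x"
  shows "mcf_obj n m kk vv p (\<lambda>I. \<Sum>j\<in>I. real_of_int (x j)) =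
     (\<Sum>i\<in>{1..n}. p i * real_of_int (qq i)) - (\<Sum>j\<in>Jset m. vv j * real_of_int (x j))"
proof -
  note B = build_int[OF FX]
  have "mcf_obj n m kk vv p (\<lambda>I. \<Sum>j\<in>I. real_of_int (x j)) =
     (\<Sum>i\<in>{1..n}. p i * real_of_int \<lfloor>\<Sum>j\<in>R i. real_of_int (x j)\<rfloor>)
             - (\<Sum>j\<in>Jset m. vv j * real_of_int \<lfloor>\<Sum>j'\<in>{j}. real_of_int (x j')\<rfloor>)"
    using int_feas(2)[OF B(1) B(2)] by simp
  also have "(\<Sum>i\<in>{1..n}. p i * real_of_int \<lfloor>\<Sum>j\<in>R i. real_of_int (x j)\<rfloor>) = (\<Sum>i\<in>{1..n}. p i * real_of_int (qq i))"
    using B(4) by (intro sum.cong) auto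
  finally show ?thesis by simp
qed

end

theorem mainTheorem3:
  fixes n m :: nat and kk :: "nat \<Rightarrow> nat" and vv :: "nat \<Rightarrow> real"
    and T :: "nat \<Rightarrow> nat set set" and l u :: "nat set \<Rightarrow> int"
    and p :: "nat \<Rightarrow> real" and q :: "nat \<Rightarrow> int"
  assumes "n \<ge> 2"
    and "assignment_message n m kk T l u"
  shows "q \<in> demand n m kk vv T l u p \<longleftrightarrow>
    (\<exists>y. mcf_optimal n m kk vv T l u p y \<and> (\<forall>I\<in>Ifam n T. y I \<in> \<int>) \<and>
         (\<forall>i\<in>{1..n}. real_of_int (q i) = y (Rset m kk i)))"
proof -
  interpret am n m kk T l u using assms by unfold_locales
  let ?v = "induced_val n m kk vv T l u"
  let ?P = "\<lambda>q. (\<Sum>i\<in>{1..n}. p i * real_of_int (q i))"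
  let ?obj = "mcf_obj n m kk vv p"
  show ?thesis
  proof
    assume qD: "q \<in> demand n m kk vv T l u p"
    then have qQ: "q \<in> Qset n m kk T l u"
      and opt: "\<forall>q'\<in>Qset n m kk T l u. ?v q' - ?P q' \<le> ?v q - ?P q"
      unfolding demand_def by auto
    obtain x where x: "feasible_x n m kk T l u q x" "?v q = (\<Sum>j\<in>Jset m. vv j * real_of_int (x j))"
      using val_att[OF qQ] by blast
    define y0 where "y0 = (\<lambda>I. \<Sum>j\<in>I. real_of_int (x j))"
    have F0: "mcf_feasible n m kk T l u y0" and Z0: "\<forall>I\<in>Ifam n T. y0 I \<in> \<int>"
      using build_int[OF x(1)] unfolding y0_def by blast+
    have obj0: "?obj y0 = ?P q - ?v q" using obj_build[OF x(1)] x(2) unfolding y0_def by simp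
    have "\<forall>y'. mcf_feasible n m kk T l u y' \<longrightarrow> ?obj y0 \<le> ?obj y'"
    proof (intro allI impI)
      fix y' assume F': "mcf_feasible n m kk T l u y'"
      obtain z where z: "mcf_feasible n m kk T l u z" "\<forall>I\<in>Ifam n T. z I \<in> \<int>" "?obj z \<le> ?obj y'"
        using int_opt[OF F'] by blast
      let ?qz = "\<lambda>i. \<lfloor>z (R i)\<rfloor>" and ?xz = "\<lambda>j. \<lfloor>z {j}\<rfloor>"
      have fz: "feasible_x n m kk T l u ?qz ?xz" using int_feas(1)[OF z(1,2)] .
      then have "?qz \<in> Qset n m kk T l u" unfolding Qset_def by blast
      then have "?v ?qz - ?P ?qz \<le> ?v q - ?P q" using opt by blast
      moreover have "(\<Sum>j\<in>Jset m. vv j * real_of_int (?xz j)) \<le> ?v ?qz" using val_ge[OF fz] .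
      moreover have "?obj z = ?P ?qz - (\<Sum>j\<in>Jset m. vv j * real_of_int (?xz j))"
        using int_feas(2)[OF z(1,2)] .
      ultimately show "?obj y0 \<le> ?obj y'" using obj0 z(3) by linarith
    qed
    then have "mcf_optimal n m kk vv T l u p y0" unfolding mcf_optimal_def using F0 by blast
    moreover have "\<forall>i\<in>{1..n}. real_of_int (q i) = y0 (R i)"
    proof
      fix i assume "i \<in> {1..n}"
      then have "(\<Sum>j\<in>R i. x j) = q i" using x(1) unfolding feasible_x_def by blast
      then show "real_of_int (q i) = y0 (R i)" unfolding y0_def by (metis of_int_sum)
    qed
    ultimately show "\<exists>y. mcf_optimal n m kk vv T l u p y \<and> (\<forall>I\<in>Ifam n T. y I \<in> \<int>) \<and>
         (\<forall>i\<in>{1..n}. real_of_int (q i) = y (Rset m kk i))" using Z0 by blast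
  next
    assume "\<exists>y. mcf_optimal n m kk vv T l u p y \<and> (\<forall>I\<in>Ifam n T. y I \<in> \<int>) \<and>
         (\<forall>i\<in>{1..n}. real_of_int (q i) = y (Rset m kk i))"
    then obtain y where yo: "mcf_optimal n m kk vv T l u p y" and Z: "\<forall>I\<in>Ifam n T. y I \<in> \<int>"
      and yq: "\<forall>i\<in>{1..n}. real_of_int (q i) = y (R i)" by blast
    have F: "mcf_feasible n m kk T l u y" and optm: "\<forall>y'. mcf_feasible n m kk T l u y' \<longrightarrow> ?obj y \<le> ?obj y'"
      using yo unfolding mcf_optimal_def by blast+
    have fq: "\<lfloor>y (R i)\<rfloor> = q i" if "i \<in> {1..n}" for i
      using yq that by (metis floor_of_int)
    let ?xy = "\<lambda>j. \<lfloor>y {j}\<rfloor>"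
    have fx: "feasible_x n m kk T l u (\<lambda>i. \<lfloor>y (R i)\<rfloor>) ?xy" using int_feas(1)[OF F Z] .
    have fxq: "feasible_x n m kk T l u q ?xy" using fx fq unfolding feasible_x_def by simp
    then have qQ: "q \<in> Qset n m kk T l u" unfolding Qset_def by blast
    have objy: "?obj y = ?P q - (\<Sum>j\<in>Jset m. vv j * real_of_int (?xy j))"
    proof -
      have "?obj y = (\<Sum>i\<in>{1..n}. p i * real_of_int \<lfloor>y (R i)\<rfloor>) - (\<Sum>j\<in>Jset m. vv j * real_of_int (?xy j))"
        using int_feas(2)[OF F Z] .
      also have "(\<Sum>i\<in>{1..n}. p i * real_of_int \<lfloor>y (R i)\<rfloor>) = ?P q" using fq by (intro sum.cong) auto
      finally show ?thesis .
    qed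
    have vq: "(\<Sum>j\<in>Jset m. vv j * real_of_int (?xy j)) \<le> ?v q" using val_ge[OF fxq] .
    have "\<forall>q'\<in>Qset n m kk T l u. ?v q' - ?P q' \<le> ?v q - ?P q"
    proof
      fix q' assume q': "q' \<in> Qset n m kk T l u"
      obtain x' where x': "feasible_x n m kk T l u q' x'" "?v q' = (\<Sum>j\<in>Jset m. vv j * real_of_int (x' j))"
        using val_att[OF q'] by blast
      have F': "mcf_feasible n m kk T l u (\<lambda>I. \<Sum>j\<in>I. real_of_int (x' j))" using build_int(1)[OF x'(1)] .
      have "?obj y \<le> ?obj (\<lambda>I. \<Sum>j\<in>I. real_of_int (x' j))" using optm F' by blast
      also have "\<dots> = ?P q' - ?v q'" using obj_build[OF x'(1)] x'(2) by simp
      finally show "?v q' - ?P q' \<le> ?v q - ?P q" using objy vq by linarith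
    qed
    then show "q \<in> demand n m kk vv T l u p" unfolding demand_def using qQ by blast
  qed
qed


end
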